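(* Let $a,b,\alpha_1,\beta_1,\alpha_2,\beta_2\in\mathbb C$ and let $p,k\ge0$ be integers. Let $\mathbf F(x,y)=\prod_{j=0}^{p-1}(\alpha_1x+j-y+\beta_1)(\alpha_2x+j-y+\beta_2)$. Then the coefficient of $x^{2p}$ in the polynomial $\widetilde{\mathcal T}_k^{a,b}[(\mathbf F(x,i))_{i}]$ does not depend on $\beta_1,\beta_2$, and equals $$\sum_{j=0}^k\frac{k!}{(k-j)!}\sum_{i=0}^{p}\binom{p}{i}\binom{p}{2p-j-i}\alpha_1^i\alpha_2^{2p-i-j}\prod_{r=0}^{k-j-1}(a-b+j+r).$$
   Context: For integers $0\le i\le k$, $P_i^k(x;a,b):=\prod_{j=0}^{k-i-1}(x+j+a)\prod_{j=0}^{i-1}(x-j+b)$. For a sequence of polynomials $(a_i(x))_{i\ge0}$, $\widetilde{\mathcal T}_k^{a,b}[(a_i(x))_i]:=(-1)^k\sum_{i=0}^k(-1)^{k-i}\binom{k}{i}P_i^k(x;a,b)\,a_i(x)$. Binomial coefficients $\binom{p}{m}$ are $0$ for $m<0$ or $m>p$. *)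

theory Defs
  imports Complex_Main "HOL-Computational_Algebra.Polynomial"
begin

definition P_poly :: "nat \<Rightarrow> nat \<Rightarrow> complex \<Rightarrow> complex \<Rightarrow> complex poly" where
  "P_poly i k a b = (\<Prod>j<k-i. [: of_nat j + a, 1 :]) * (\<Prod>j<i. [: b - of_nat j, 1 :])"

definition T_tilde :: "nat \<Rightarrow> complex \<Rightarrow> complex \<Rightarrow> (nat \<Rightarrow> complex poly) \<Rightarrow> complex poly" where
  "T_tilde k a b A = smult ((-1) ^ k)
     (\<Sum>i=0..k. smult ((-1) ^ (k - i) * of_nat (k choose i)) (P_poly i k a b * A i))"

definition F_poly :: "complex \<Rightarrow> complex \<Rightarrow> complex \<Rightarrow> complex \<Rightarrow> nat \<Rightarrow> complex \<Rightarrow> complex poly" where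
  "F_poly \<alpha>1 \<beta>1 \<alpha>2 \<beta>2 p y =
     (\<Prod>j<p. [: of_nat j - y + \<beta>1, \<alpha>1 :] * [: of_nat j - y + \<beta>2, \<alpha>2 :])"

end

theory Submission
  imports Defs
begin

lemma smult_sum_right: "smult c (sum f S) = sum (\<lambda>i. smult c (f i)) S"
  by (induct S rule: infinite_finite_induct) (auto simp: smult_add_right)

lemma poch_up: "(\<Prod>j<n. of_nat j + a + (x::complex)) = pochhammer (x+a) n"
  by (induct n) (auto simp: lessThan_Suc pochhammer_Suc algebra_simps)

lemma poch_down: "(\<Prod>j<n. b - of_nat j + (x::complex)) = (-1)^n * pochhammer (-x-b) n"
  by (induct n) (auto simp: lessThan_Suc pochhammer_Suc algebra_simps)

lemma poly_P: "poly (P_poly i k a b) x = pochhammer (x+a) (k-i) * ((-1)^i * pochhammer (-x-b) i)"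
  by (simp add: P_poly_def poly_prod poch_up poch_down)

lemma poly_Fl: "poly (\<Prod>j<m. [:(b::complex) - of_nat j, 1:]) x = (-1)^m * pochhammer (-x-b) m"
  by (simp add: poly_prod poch_down)

lemma T1: "(\<Sum>i=0..n. (-1)^(n-i) * of_nat (n choose i) * (pochhammer (x+a) (n-i) * ((-1)^i * pochhammer (-x-c) i)))
   = (-1)^n * pochhammer (a-c) (n::nat) * (1::complex)"
proof -
  have "pochhammer (a-c) n = pochhammer ((-x-c) + (x+a)) n" by (simp add: algebra_simps)
  also have "\<dots> = (\<Sum>i\<le>n. of_nat (n choose i) * pochhammer (-x-c) i * pochhammer (x+a) (n - i))"
    by (rule pochhammer_binomial_sum)
  finally have e: "pochhammer (a-c) n = \<dots>" .
  have "(\<Sum>i=0..n. (-1)^(n-i) * of_nat (n choose i) * (pochhammer (x+a) (n-i) * ((-1)^i * pochhammer (-x-c) i)))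
     = (\<Sum>i\<le>n. (-1)^n * (of_nat (n choose i) * pochhammer (-x-c) i * pochhammer (x+a) (n - i)))"
    unfolding atMost_atLeast0
  proof (rule sum.cong)
    fix i assume "i \<in> {0..n}"
    then have "(-1::complex)^(n-i) * (-1)^i = (-1)^n" by (simp add: power_add[symmetric])
    have "(-1)^(n-i) * of_nat (n choose i) * (pochhammer (x+a) (n-i) * ((-1)^i * pochhammer (-x-c) i))
       = ((-1::complex)^(n-i) * (-1)^i) * (of_nat (n choose i) * pochhammer (-x-c) i * pochhammer (x+a) (n - i))"
      by (simp only: mult_ac)
    then show "(-1)^(n-i) * of_nat (n choose i) * (pochhammer (x+a) (n-i) * ((-1)^i * pochhammer (-x-c) i))
       = (-1)^n * (of_nat (n choose i) * pochhammer (-x-c) i * pochhammer (x+a) (n - i))"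
      using \<open>(-1::complex)^(n-i) * (-1)^i = (-1)^n\<close> by simp
  qed simp
  also have "\<dots> = (-1)^n * pochhammer (a-c) n" by (simp add: e sum_distrib_left)
  finally show ?thesis by simp
qed

lemma rearr: fixes A B C D s P u v Pm Pi y :: complex assumes "A*B = C*D"
  shows "s*A*(P*((u*v)*(Pm*Pi))*(B*y)) = (s*D*(P*(u*Pi)))*(C*(v*Pm*y))"
proof -
  have "s*A*(P*((u*v)*(Pm*Pi))*(B*y)) = s*(A*B)*P*u*v*Pm*Pi*y" by (simp add: mult_ac)
  also have "\<dots> = s*(C*D)*P*u*v*Pm*Pi*y" using assms by simp
  also have "\<dots> = (s*D*(P*(u*Pi)))*(C*(v*Pm*y))" by (simp add: mult_ac)
  finally show ?thesis .
qed

lemma T_scalar: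
  fixes a b x y :: complex
  shows "(-1)^k * (\<Sum>i=0..k. (-1)^(k-i) * of_nat (k choose i) *
      (pochhammer (x+a) (k-i) * ((-1)^i * pochhammer (-x-b) i) * (of_nat (i choose m) * y)))
    = (-1)^m * of_nat (k choose m) * pochhammer (a - b + of_nat m) (k-m) * ((-1)^m * pochhammer (-x-b) m * y)"
proof (cases "m \<le> k")
  case False
  then have "(\<Sum>i=0..k. (-1)^(k-i) * of_nat (k choose i) *
      (pochhammer (x+a) (k-i) * ((-1)^i * pochhammer (-x-b) i) * (of_nat (i choose m) * y))) = 0"
    by (intro sum.neutral) auto
  then show ?thesis using False by simp
next
  case True
  define n where "n = k - m"
  have k: "k = n + m" using True n_def by simp
  have sh: "\<And>g. sum g {m..k} = (\<Sum>i=0..n. g (i+m))"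
    using sum.shift_bounds_cl_nat_ivl[of _ 0 m n] by (simp add: k)
  have "(\<Sum>i=0..k. (-1)^(k-i) * of_nat (k choose i) *
      (pochhammer (x+a) (k-i) * ((-1)^i * pochhammer (-x-b) i) * (of_nat (i choose m) * y)))
    = (\<Sum>i=m..k. (-1)^(k-i) * of_nat (k choose i) *
      (pochhammer (x+a) (k-i) * ((-1)^i * pochhammer (-x-b) i) * (of_nat (i choose m) * y)))"
    by (rule sum.mono_neutral_right) auto
  also have "\<dots> = (\<Sum>i=0..n. (-1)^(k-(i+m)) * of_nat (k choose (i+m)) *
      (pochhammer (x+a) (k-(i+m)) * ((-1)^(i+m) * pochhammer (-x-b) (i+m)) * (of_nat ((i+m) choose m) * y)))"
    by (simp only: sh)
  also have "\<dots> = (\<Sum>i=0..n. ((-1)^(n-i) * of_nat (n choose i) *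
      (pochhammer (x+a) (n-i) * ((-1)^i * pochhammer (-x-(b - of_nat m)) i))) *
      (of_nat (k choose m) * ((-1)^m * pochhammer (-x-b) m * y)))"
  proof (rule sum.cong)
    fix i assume i: "i \<in> {0..n}"
    have c: "of_nat (k choose (i+m)) * of_nat ((i+m) choose m) = (of_nat (k choose m) * of_nat (n choose i) :: complex)"
      using choose_mult[of m "i+m" k] i by (simp add: k flip: of_nat_mult)
    have p: "pochhammer (-x-b) (i+m) = pochhammer (-x-b) m * pochhammer (-x-(b - of_nat m)) i"
    proof -
      have q: "-x-b+of_nat m = -x-(b - of_nat m)" by simp
      have "pochhammer (-x-b) (i+m) = pochhammer (-x-b) (m+i)" by (simp only: add.commute)
      also have "\<dots> = pochhammer (-x-b) m * pochhammer (-x-b + of_nat m) i" by (rule pochhammer_product')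
      finally show ?thesis unfolding q .
    qed
    have e1: "k-(i+m) = n - i" by (simp add: k)
    show "(-1)^(k-(i+m)) * of_nat (k choose (i+m)) *
      (pochhammer (x+a) (k-(i+m)) * ((-1)^(i+m) * pochhammer (-x-b) (i+m)) * (of_nat ((i+m) choose m) * y))
      = ((-1)^(n-i) * of_nat (n choose i) *
      (pochhammer (x+a) (n-i) * ((-1)^i * pochhammer (-x-(b - of_nat m)) i))) *
      (of_nat (k choose m) * ((-1)^m * pochhammer (-x-b) m * y))"
      unfolding e1 p power_add by (rule rearr[OF c])
  qed simp
  also have "\<dots> = (-1)^n * pochhammer (a - (b - of_nat m)) n * (of_nat (k choose m) * ((-1)^m * pochhammer (-x-b) m * y))"
    by (simp only: T1 mult_1_right flip: sum_distrib_right)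
  finally have S: "(\<Sum>i=0..k. (-1)^(k-i) * of_nat (k choose i) *
      (pochhammer (x+a) (k-i) * ((-1)^i * pochhammer (-x-b) i) * (of_nat (i choose m) * y)))
     = (-1)^n * pochhammer (a - (b - of_nat m)) n * (of_nat (k choose m) * ((-1)^m * pochhammer (-x-b) m * y))" .
  have s0: "(-1::complex)^(n+n) = 1" by (simp add: mult_2[symmetric] power_mult)
  have s: "(-1::complex)^k * (-1)^n = (-1)^m"
  proof -
    have "(-1::complex)^k * (-1)^n = (-1)^(n+n) * (-1)^m" by (simp add: k power_add mult_ac)
    then show ?thesis using s0 by simp
  qed
  have t: "a - (b - of_nat m) = a - b + of_nat m" by simp
  have "(-1)^k * ((-1)^n * pochhammer (a - (b - of_nat m)) n * (of_nat (k choose m) * ((-1)^m * pochhammer (-x-b) m * y)))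
    = ((-1::complex)^k * (-1)^n) * pochhammer (a - b + of_nat m) n * (of_nat (k choose m) * ((-1)^m * pochhammer (-x-b) m * y))"
    unfolding t by (simp only: mult.assoc)
  also have "\<dots> = (-1)^m * of_nat (k choose m) * pochhammer (a - b + of_nat m) (k-m) * ((-1)^m * pochhammer (-x-b) m * y)"
    unfolding s unfolding n_def by (simp only: mult_ac)
  finally show ?thesis unfolding S .
qed

lemma T_binom: "T_tilde k a b (\<lambda>i. smult (of_nat (i choose m)) g) =
  smult ((-1)^m * of_nat (k choose m) * pochhammer (a - b + of_nat m) (k-m)) ((\<Prod>j<m. [:b - of_nat j, 1:]) * g)"
proof -
  have "poly (T_tilde k a b (\<lambda>i. smult (of_nat (i choose m)) g)) x =
     poly (smult ((-1)^m * of_nat (k choose m) * pochhammer (a - b + of_nat m) (k-m)) ((\<Prod>j<m. [:b - of_nat j, 1:]) * g)) x" for x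
    using T_scalar[of k x a b m "poly g x"]
    by (simp add: T_tilde_def poly_sum poly_P poly_Fl mult_ac)
  then show ?thesis by (simp add: poly_eq_poly_eq_iff[symmetric] fun_eq_iff)
qed

lemma T_lin: "finite S \<Longrightarrow> T_tilde k a b (\<lambda>i. \<Sum>t\<in>S. A t i) = (\<Sum>t\<in>S. T_tilde k a b (A t))"
  by (simp add: T_tilde_def sum_distrib_left smult_sum_right sum.swap[of _ S])

lemma bin_shift_nat: "(i - t) * (i choose t) = Suc t * (i choose Suc t)"
proof (cases i)
  case 0 then show ?thesis by (cases t) auto
next
  case (Suc i') then show ?thesis using binomial_absorb_comp[of i t] Suc_times_binomial[of t i'] by simp
qed

lemma bin_shift: "(of_nat i - of_nat t) * of_nat (i choose t) = (of_nat (Suc t) * of_nat (i choose Suc t) :: complex)"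
proof (cases "t \<le> i")
  case True
  then have "(of_nat i - of_nat t :: complex) = of_nat (i - t)" by (simp add: of_nat_diff)
  then show ?thesis using bin_shift_nat[of i t] by (metis of_nat_mult)
next
  case False
  then have e: "i choose t = 0" "i choose Suc t = 0" by auto
  show ?thesis unfolding e by simp
qed

lemma coeff_lin: "coeff ([:u, v:] * q) j = u * coeff q j + (if j = 0 then 0 else v * coeff q (j - 1))"
  by (cases j) auto

lemma lin_split: "g * [:c - of_nat i, \<alpha>:] = [:c - of_nat t, \<alpha>:] * g - smult (of_nat i - of_nat t) (g :: complex poly)"
  by (simp add: poly_eq_poly_eq_iff[symmetric] fun_eq_iff algebra_simps)

locale stepctx =
  fixes G g :: "nat \<Rightarrow> complex poly" and H :: "complex poly" and n :: nat and c \<alpha> :: complex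
  assumes G: "\<And>i. G i = (\<Sum>t\<le>n. smult (of_nat (i choose t)) (g t))"
    and dg: "\<And>t. degree (g t) \<le> n - t" and z: "\<And>t. t > n \<Longrightarrow> g t = 0"
    and dH: "degree H \<le> n"
    and top: "\<And>t. t \<le> n \<Longrightarrow> coeff (g t) (n-t) = fact t * (-1)^t * coeff H (n-t)"
begin

definition h where "h t = [:c - of_nat t, \<alpha>:] * g t - smult (of_nat t) (g (t-1))"

lemma h_sum: "G i * [:c - of_nat i, \<alpha>:] = (\<Sum>t\<le>Suc n. smult (of_nat (i choose t)) (h t))"
proof -
  have "G i * [:c - of_nat i, \<alpha>:] = (\<Sum>t\<le>n. smult (of_nat (i choose t)) (g t * [:c - of_nat i, \<alpha>:]))"
    by (simp only: G sum_distrib_right mult_smult_left)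
  also have "\<dots> = (\<Sum>t\<le>n. smult (of_nat (i choose t)) ([:c - of_nat t, \<alpha>:] * g t))
      - (\<Sum>t\<le>n. smult (of_nat (Suc t) * of_nat (i choose Suc t)) (g t))"
  proof -
    have "smult (of_nat (i choose t)) (g t * [:c - of_nat i, \<alpha>:]) =
      smult (of_nat (i choose t)) ([:c - of_nat t, \<alpha>:] * g t) - smult (of_nat (Suc t) * of_nat (i choose Suc t)) (g t)" for t
    proof -
      have "smult (of_nat (i choose t)) (g t * [:c - of_nat i, \<alpha>:]) =
        smult (of_nat (i choose t)) ([:c - of_nat t, \<alpha>:] * g t) - smult ((of_nat i - of_nat t) * of_nat (i choose t)) (g t)"
        by (simp only: lin_split[of "g t" c i \<alpha> t] smult_diff_right smult_smult mult.commute)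
      then show ?thesis by (simp only: bin_shift)
    qed
    then show ?thesis by (simp only: sum_subtractf)
  qed
  also have "(\<Sum>t\<le>n. smult (of_nat (i choose t)) ([:c - of_nat t, \<alpha>:] * g t))
     = (\<Sum>t\<le>Suc n. smult (of_nat (i choose t)) ([:c - of_nat t, \<alpha>:] * g t))"
    by (simp add: z)
  also have "(\<Sum>t\<le>n. smult (of_nat (Suc t) * of_nat (i choose Suc t)) (g t))
     = (\<Sum>t\<le>Suc n. smult (of_nat (i choose t)) (smult (of_nat t) (g (t-1))))"
    by (simp add: sum.atMost_Suc_shift del: sum.atMost_Suc) (simp add: mult.commute)
  finally show ?thesis by (simp add: h_def smult_diff_right sum_subtractf)
qed

lemma h_deg: "degree (h t) \<le> Suc n - t"
proof -
  have 1: "degree ([:c - of_nat t, \<alpha>:] * g t) \<le> Suc n - t"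
  proof (cases "t \<le> n")
    case True
    have "degree ([:c - of_nat t, \<alpha>:] * g t) \<le> degree [:c - of_nat t, \<alpha>:] + degree (g t)"
      by (rule degree_mult_le)
    also have "\<dots> \<le> 1 + (n - t)" using dg[of t] by (intro add_mono) auto
    finally show ?thesis using True by simp
  qed (simp add: z)
  have 2: "degree (smult (of_nat t) (g (t-1))) \<le> Suc n - t"
  proof (cases t)
    case (Suc s) then show ?thesis using dg[of s] degree_smult_le[of "of_nat t" "g s"] by simp
  qed simp
  show ?thesis unfolding h_def by (rule degree_diff_le[OF 1 2])
qed

lemma h_zero: "t > Suc n \<Longrightarrow> h t = 0"
  by (simp add: h_def z)

lemma H_deg: "degree (H * [:1, \<alpha>:]) \<le> Suc n"
proof -
  have "degree (H * [:1, \<alpha>:]) \<le> degree H + degree [:1, \<alpha>:]" by (rule degree_mult_le)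
  also have "\<dots> \<le> n + 1" using dH by (intro add_mono) auto
  finally show ?thesis by simp
qed

lemma coeff_H1: "coeff (H * [:1, \<alpha>:]) j = coeff H j + (if j = 0 then 0 else \<alpha> * coeff H (j - 1))"
  using coeff_lin[of 1 \<alpha> H j] by (simp add: mult.commute)

lemma gzero_above: "n - t < j \<Longrightarrow> coeff (g t) j = 0"
  using dg[of t] by (simp add: coeff_eq_0)

lemma h_top: "t \<le> Suc n \<Longrightarrow> coeff (h t) (Suc n - t) = fact t * (-1)^t * coeff (H * [:1, \<alpha>:]) (Suc n - t)"
proof -
  assume t: "t \<le> Suc n"
  have hc: "coeff (h t) j = (c - of_nat t) * coeff (g t) j + (if j = 0 then 0 else \<alpha> * coeff (g t) (j - 1))
      - of_nat t * coeff (g (t-1)) j" for j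
    by (simp only: h_def coeff_diff coeff_smult coeff_lin)
  show ?thesis
  proof (cases t)
    case 0
    have "coeff H (Suc n) = 0" using dH by (simp add: coeff_eq_0)
    then show ?thesis unfolding hc coeff_H1 using top[of 0] gzero_above[of 0 "Suc n"] by (simp add: 0)
  next
    case (Suc s)
    have s: "s \<le> n" using t Suc by simp
    have e1: "Suc n - t = n - s" using Suc by simp
    have g0: "coeff (g t) (n - s) = 0"
    proof (cases "t \<le> n")
      case True then show ?thesis using gzero_above[of t "n-s"] Suc by simp
    qed (simp add: z)
    have f: "fact t = of_nat t * (fact s :: complex)" using Suc by simp
    have m: "(-1::complex)^t = - ((-1)^s)" using Suc by simp
    show ?thesis
    proof (cases "t \<le> n")
      case True
      have e2: "n - s - 1 = n - t" using Suc True by simp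
      have ns: "n - s \<noteq> 0" using Suc True by simp
      have tt: "coeff (g t) (n-t) = fact t * (-1)^t * coeff H (n-t)" using top True by simp
      have ts: "coeff (g s) (n-s) = fact s * (-1)^s * coeff H (n-s)" using top s by simp
      have ts1: "t - 1 = s" using Suc by simp
      show ?thesis unfolding e1 hc coeff_H1 ts1
        by (simp only: g0 ns e2 tt ts if_False) (simp add: f m algebra_simps)
    next
      case False
      then have tn: "t = Suc n" using t by simp
      then have sn: "s = n" using Suc by simp
      show ?thesis unfolding e1 hc coeff_H1 using top[of s] g0
        by (simp add: sn f m Suc algebra_simps)
    qed
  qed
qed

lemma step_ex: "\<exists>h. (\<forall>i. G i * [:c - of_nat i, \<alpha>:] = (\<Sum>t\<le>Suc n. smult (of_nat (i choose t)) (h t)))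
  \<and> (\<forall>t. degree (h t) \<le> Suc n - t) \<and> (\<forall>t. t > Suc n \<longrightarrow> h t = 0)
  \<and> (\<forall>t. t \<le> Suc n \<longrightarrow> coeff (h t) (Suc n - t) = fact t * (-1)^t * coeff (H * [:1, \<alpha>:]) (Suc n - t))"
  using h_sum h_deg h_zero h_top by blast

end

definition HH :: "complex \<Rightarrow> complex \<Rightarrow> nat \<Rightarrow> complex poly" where
  "HH \<alpha>1 \<alpha>2 p = [:1, \<alpha>1:]^p * [:1, \<alpha>2:]^p"

lemma deg_lin_pow: "degree ([:1, \<alpha>:]^p) \<le> p" for \<alpha> :: complex
  by (rule order.trans[OF degree_power_le]) (cases "\<alpha> = 0", auto)

lemma HH_deg: "degree (HH \<alpha>1 \<alpha>2 p) \<le> 2 * p"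
proof -
  have "degree (HH \<alpha>1 \<alpha>2 p) \<le> degree ([:1, \<alpha>1:]^p) + degree ([:1, \<alpha>2:]^p)"
    unfolding HH_def by (rule degree_mult_le)
  also have "\<dots> \<le> p + p"
    by (intro add_mono deg_lin_pow)
  finally show ?thesis by simp
qed

lemma expand: "\<exists>g. (\<forall>i. F_poly \<alpha>1 \<beta>1 \<alpha>2 \<beta>2 p (of_nat i) = (\<Sum>t\<le>2*p. smult (of_nat (i choose t)) (g t)))
  \<and> (\<forall>t. degree (g t) \<le> 2*p - t) \<and> (\<forall>t. t > 2*p \<longrightarrow> g t = 0)
  \<and> (\<forall>t. t \<le> 2*p \<longrightarrow> coeff (g t) (2*p - t) = fact t * (-1)^t * coeff (HH \<alpha>1 \<alpha>2 p) (2*p - t))"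
proof (induction p)
  case 0
  show ?case
    by (rule exI[of _ "\<lambda>t. if t = 0 then 1 else 0"]) (simp add: F_poly_def HH_def)
next
  case (Suc p)
  then obtain g where g: "\<forall>i. F_poly \<alpha>1 \<beta>1 \<alpha>2 \<beta>2 p (of_nat i) = (\<Sum>t\<le>2*p. smult (of_nat (i choose t)) (g t))"
    "\<forall>t. degree (g t) \<le> 2*p - t" "\<forall>t. t > 2*p \<longrightarrow> g t = 0"
    "\<forall>t. t \<le> 2*p \<longrightarrow> coeff (g t) (2*p - t) = fact t * (-1)^t * coeff (HH \<alpha>1 \<alpha>2 p) (2*p - t)"
    by blast
  interpret s1: stepctx "\<lambda>i. F_poly \<alpha>1 \<beta>1 \<alpha>2 \<beta>2 p (of_nat i)" g "HH \<alpha>1 \<alpha>2 p" "2*p" "of_nat p + \<beta>1" \<alpha>1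
    using g HH_deg by unfold_locales auto
  obtain h1 where h1: "\<forall>i. F_poly \<alpha>1 \<beta>1 \<alpha>2 \<beta>2 p (of_nat i) * [:of_nat p + \<beta>1 - of_nat i, \<alpha>1:]
      = (\<Sum>t\<le>Suc (2*p). smult (of_nat (i choose t)) (h1 t))"
    "\<forall>t. degree (h1 t) \<le> Suc (2*p) - t" "\<forall>t. t > Suc (2*p) \<longrightarrow> h1 t = 0"
    "\<forall>t. t \<le> Suc (2*p) \<longrightarrow> coeff (h1 t) (Suc (2*p) - t) = fact t * (-1)^t * coeff (HH \<alpha>1 \<alpha>2 p * [:1, \<alpha>1:]) (Suc (2*p) - t)"
    using s1.step_ex by blast
  interpret s2: stepctx "\<lambda>i. F_poly \<alpha>1 \<beta>1 \<alpha>2 \<beta>2 p (of_nat i) * [:of_nat p + \<beta>1 - of_nat i, \<alpha>1:]" h1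
     "HH \<alpha>1 \<alpha>2 p * [:1, \<alpha>1:]" "Suc (2*p)" "of_nat p + \<beta>2" \<alpha>2
    using h1 s1.H_deg by unfold_locales auto
  obtain h2 where h2: "\<forall>i. F_poly \<alpha>1 \<beta>1 \<alpha>2 \<beta>2 p (of_nat i) * [:of_nat p + \<beta>1 - of_nat i, \<alpha>1:] * [:of_nat p + \<beta>2 - of_nat i, \<alpha>2:]
      = (\<Sum>t\<le>Suc (Suc (2*p)). smult (of_nat (i choose t)) (h2 t))"
    "\<forall>t. degree (h2 t) \<le> Suc (Suc (2*p)) - t" "\<forall>t. t > Suc (Suc (2*p)) \<longrightarrow> h2 t = 0"
    "\<forall>t. t \<le> Suc (Suc (2*p)) \<longrightarrow> coeff (h2 t) (Suc (Suc (2*p)) - t) = fact t * (-1)^t * coeff (HH \<alpha>1 \<alpha>2 p * [:1, \<alpha>1:] * [:1, \<alpha>2:]) (Suc (Suc (2*p)) - t)"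
    using s2.step_ex by blast
  have e2: "2 * Suc p = Suc (Suc (2*p))" by simp
  have eH: "HH \<alpha>1 \<alpha>2 (Suc p) = HH \<alpha>1 \<alpha>2 p * [:1, \<alpha>1:] * [:1, \<alpha>2:]"
    by (simp only: HH_def power_Suc mult_ac)
  have eF: "F_poly \<alpha>1 \<beta>1 \<alpha>2 \<beta>2 (Suc p) (of_nat i) = F_poly \<alpha>1 \<beta>1 \<alpha>2 \<beta>2 p (of_nat i) * [:of_nat p + \<beta>1 - of_nat i, \<alpha>1:] * [:of_nat p + \<beta>2 - of_nat i, \<alpha>2:]" for i
  proof -
    have l: "\<And>\<beta>. (of_nat p - of_nat i + \<beta> :: complex) = of_nat p + \<beta> - of_nat i" by simp
    show ?thesis by (simp only: F_poly_def prod.lessThan_Suc l mult.assoc)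
  qed
  show ?case unfolding e2 eH eF using h2 by blast
qed

lemma coeff_Fl: "degree q \<le> d \<Longrightarrow> coeff ((\<Prod>j<m. [:f j, 1:]) * q) (m + d) = coeff (q :: complex poly) d"
proof (induction m arbitrary: q d)
  case 0 then show ?case by simp
next
  case (Suc m)
  have dq: "degree ([:f m, 1:] * q) \<le> Suc d"
  proof -
    have "degree ([:f m, 1:] * q) \<le> degree [:f m, 1:] + degree q" by (rule degree_mult_le)
    also have "\<dots> \<le> 1 + d" using Suc.prems by (intro add_mono) auto
    finally show ?thesis by simp
  qed
  have "coeff ((\<Prod>j<Suc m. [:f j, 1:]) * q) (Suc m + d) = coeff ((\<Prod>j<m. [:f j, 1:]) * ([:f m, 1:] * q)) (m + Suc d)"
    by (simp only: prod.lessThan_Suc mult.assoc add_Suc_shift)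
  also have "\<dots> = coeff ([:f m, 1:] * q) (Suc d)" by (rule Suc.IH[OF dq])
  also have "\<dots> = coeff q d" using Suc.prems by (simp add: coeff_lin coeff_eq_0)
  finally show ?case .
qed

lemma main: "coeff (T_tilde k a b (\<lambda>i. F_poly \<alpha>1 \<beta>1 \<alpha>2 \<beta>2 p (of_nat i))) (2*p)
  = (\<Sum>t\<le>2*p. ((-1)^t * of_nat (k choose t) * pochhammer (a - b + of_nat t) (k-t)) *
       (fact t * (-1)^t * coeff (HH \<alpha>1 \<alpha>2 p) (2*p - t)))"
proof -
  obtain g where g: "\<forall>i. F_poly \<alpha>1 \<beta>1 \<alpha>2 \<beta>2 p (of_nat i) = (\<Sum>t\<le>2*p. smult (of_nat (i choose t)) (g t))"
    "\<forall>t. degree (g t) \<le> 2*p - t" "\<forall>t. t > 2*p \<longrightarrow> g t = 0"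
    "\<forall>t. t \<le> 2*p \<longrightarrow> coeff (g t) (2*p - t) = fact t * (-1)^t * coeff (HH \<alpha>1 \<alpha>2 p) (2*p - t)"
    using expand by blast
  have "T_tilde k a b (\<lambda>i. F_poly \<alpha>1 \<beta>1 \<alpha>2 \<beta>2 p (of_nat i))
      = T_tilde k a b (\<lambda>i. \<Sum>t\<le>2*p. smult (of_nat (i choose t)) (g t))"
    using g(1) by simp
  also have "\<dots> = (\<Sum>t\<le>2*p. T_tilde k a b (\<lambda>i. smult (of_nat (i choose t)) (g t)))"
    by (rule T_lin) simp
  also have "\<dots> = (\<Sum>t\<le>2*p. smult ((-1)^t * of_nat (k choose t) * pochhammer (a - b + of_nat t) (k-t))
      ((\<Prod>j<t. [:b - of_nat j, 1:]) * g t))"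
    by (simp only: T_binom)
  finally have e: "T_tilde k a b (\<lambda>i. F_poly \<alpha>1 \<beta>1 \<alpha>2 \<beta>2 p (of_nat i)) = \<dots>" .
  show ?thesis unfolding e coeff_sum coeff_smult
  proof (rule sum.cong)
    fix t assume t: "t \<in> {..2*p}"
    have "coeff ((\<Prod>j<t. [:b - of_nat j, 1:]) * g t) (t + (2*p - t)) = coeff (g t) (2*p - t)"
      using g(2) by (intro coeff_Fl) auto
    then show "((-1)^t * of_nat (k choose t) * pochhammer (a - b + of_nat t) (k-t)) *
      coeff ((\<Prod>j<t. [:b - of_nat j, 1:]) * g t) (2 * p) =
      ((-1)^t * of_nat (k choose t) * pochhammer (a - b + of_nat t) (k-t)) *
       (fact t * (-1)^t * coeff (HH \<alpha>1 \<alpha>2 p) (2*p - t))"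
      using t g(4) by simp
  qed simp
qed

lemma coeff_lin_pow: "coeff ([:1, \<alpha>:]^p) u = of_nat (p choose u) * (\<alpha>::complex)^u"
proof (induction p arbitrary: u)
  case 0 then show ?case by (cases u) auto
next
  case (Suc p)
  show ?case
  proof (cases u)
    case 0 then show ?thesis using Suc.IH[of 0] by (simp add: coeff_lin)
  next
    case (Suc u')
    then show ?thesis using Suc.IH[of u] Suc.IH[of u'] by (simp add: coeff_lin algebra_simps)
  qed
qed



lemma inner: "t \<le> 2*p \<Longrightarrow> coeff (HH \<alpha>1 \<alpha>2 p) (2*p - t) = (\<Sum>i=0..p. if i + t \<le> 2*p then
   of_nat (p choose i) * of_nat (p choose (2*p - t - i)) * \<alpha>1^i * \<alpha>2^(2*p - i - t) else 0)"
proof -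
  assume t: "t \<le> 2*p"
  define M where "M = 2*p - t"
  define f where "f i = of_nat (p choose i) * of_nat (p choose (M - i)) * \<alpha>1^i * \<alpha>2^(M - i)" for i
  have "coeff (HH \<alpha>1 \<alpha>2 p) M = (\<Sum>i\<le>M. f i)"
    unfolding HH_def coeff_mult coeff_lin_pow f_def by (simp add: mult_ac)
  also have "\<dots> = sum f ({0..p} \<inter> {..M})"
    by (rule sum.mono_neutral_right) (auto simp: f_def)
  also have "\<dots> = (\<Sum>i=0..p. if i \<in> {..M} then f i else 0)"
    by (rule sum.inter_restrict) simp
  also have "\<dots> = (\<Sum>i=0..p. if i + t \<le> 2*p then
     of_nat (p choose i) * of_nat (p choose (2*p - t - i)) * \<alpha>1^i * \<alpha>2^(2*p - i - t) else 0)"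
  proof (rule sum.cong)
    fix i assume "i \<in> {0..p}"
    have "2*p - i - t = M - i" "2*p - t - i = M - i" unfolding M_def by auto
    then show "(if i \<in> {..M} then f i else 0) = (if i + t \<le> 2*p then
     of_nat (p choose i) * of_nat (p choose (2*p - t - i)) * \<alpha>1^i * \<alpha>2^(2*p - i - t) else 0)"
      using t by (auto simp: f_def M_def)
  qed simp
  finally show ?thesis unfolding M_def .
qed

lemma final_eq:
  "(\<Sum>t\<le>2*p. ((-1)^t * of_nat (k choose t) * pochhammer (a - b + of_nat t) (k-t)) *
       (fact t * (-1)^t * coeff (HH \<alpha>1 \<alpha>2 p) (2*p - t)))
   = (\<Sum>j=0..k. (fact k / fact (k - j)) *
               (\<Sum>i=0..p. (if i + j \<le> 2 * p then
                   of_nat (p choose i) * of_nat (p choose (2 * p - j - i)) *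
                   \<alpha>1 ^ i * \<alpha>2 ^ (2 * p - i - j) *
                   (\<Prod>r<k - j. a - b + of_nat j + of_nat r)
                 else 0)))"
  (is "sum ?V _ = sum ?Z _")
proof -
  have "sum ?V {..2*p} = sum ?V {..min (2*p) k}"
    by (rule sum.mono_neutral_right) auto
  also have "\<dots> = sum ?Z {..min (2*p) k}"
  proof (rule sum.cong)
    fix t assume "t \<in> {..min (2*p) k}"
    then have tk: "t \<le> k" and tp: "t \<le> 2*p" by auto
    have s: "(-1::complex)^t * (-1)^t = 1" by (simp flip: power_add add: mult_2[symmetric] power_mult)
    have c: "of_nat (k choose t) * fact t = (fact k / fact (k - t) :: complex)"
      using binomial_fact[OF tk, where 'a=complex] by (simp add: field_simps)
    have pr: "(\<Prod>r<k - t. a - b + of_nat t + of_nat r) = pochhammer (a - b + of_nat t) (k-t)"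
      by (simp add: pochhammer_prod atLeast0LessThan)
    have "?V t = (of_nat (k choose t) * fact t) * coeff (HH \<alpha>1 \<alpha>2 p) (2*p - t) * pochhammer (a - b + of_nat t) (k-t)"
    proof -
      have "?V t = ((-1::complex)^t * (-1)^t) * ((of_nat (k choose t) * fact t) * coeff (HH \<alpha>1 \<alpha>2 p) (2*p - t) * pochhammer (a - b + of_nat t) (k-t))"
        by (simp only: mult_ac)
      then show ?thesis unfolding s by simp
    qed
    also have "\<dots> = ?Z t"
      unfolding c inner[OF tp] pr sum_distrib_right
      by (simp add: sum_distrib_left mult_ac if_distrib cong: if_cong)
    finally show "?V t = ?Z t" .
  qed simp
  also have "\<dots> = sum ?Z {0..k}"
  proof (rule sum.mono_neutral_left)
    show "\<forall>i\<in>{0..k} - {..min (2*p) k}. ?Z i = 0"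
    proof
      fix j assume "j \<in> {0..k} - {..min (2*p) k}"
      then have "j > 2*p" by auto
      then have "(\<Sum>i=0..p. (if i + j \<le> 2 * p then
                   of_nat (p choose i) * of_nat (p choose (2 * p - j - i)) *
                   \<alpha>1 ^ i * \<alpha>2 ^ (2 * p - i - j) *
                   (\<Prod>r<k - j. a - b + of_nat j + of_nat r)
                 else 0)) = 0" by (intro sum.neutral) auto
      then show "?Z j = 0" by simp
    qed
  qed auto
  finally show ?thesis .
qed


theorem proposition6:
  fixes a b \<alpha>1 \<beta>1 \<alpha>2 \<beta>2 \<beta>1' \<beta>2' :: complex and p k :: nat
  shows "coeff (T_tilde k a b (\<lambda>i. F_poly \<alpha>1 \<beta>1 \<alpha>2 \<beta>2 p (of_nat i))) (2 * p)
           = coeff (T_tilde k a b (\<lambda>i. F_poly \<alpha>1 \<beta>1' \<alpha>2 \<beta>2' p (of_nat i))) (2 * p)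
       \<and> coeff (T_tilde k a b (\<lambda>i. F_poly \<alpha>1 \<beta>1 \<alpha>2 \<beta>2 p (of_nat i))) (2 * p)
           = (\<Sum>j=0..k. (fact k / fact (k - j)) *
               (\<Sum>i=0..p. (if i + j \<le> 2 * p then
                   of_nat (p choose i) * of_nat (p choose (2 * p - j - i)) *
                   \<alpha>1 ^ i * \<alpha>2 ^ (2 * p - i - j) *
                   (\<Prod>r<k - j. a - b + of_nat j + of_nat r)
                 else 0)))"
  unfolding main final_eq by simp

end
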